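(* Let $n\ge1$ be an integer and let $\phi:[0,\infty)\to(0,\infty)$ be differentiable and decreasing with $\phi(r)\to0$ as $r\to\infty$. Define $\widetilde\phi(r)=\min_{\delta>0}\big(\delta+\delta^{-2n}\phi(\delta^{2n+1}r)\big)$ for $r>0$, and let $t(r)$ be the unique solution $t$ of $t/\phi(t)=r$. Then $t(r)$ is differentiable and strictly increasing to $+\infty$, and $$\phi(t(r))^{\frac1{2n+1}}\le\widetilde\phi(r)\le 2\,\phi(t(r))^{\frac1{2n+1}},\qquad r>0.$$ *)

theory Defs
  imports "HOL-Analysis.Analysis"
begin

text \<open>The auxiliary function  phi~(r) = min over delta>0 of (delta + delta^(-2n) phi(delta^(2n+1) r)).
  The minimum is rendered as the infimum over delta > 0 (they agree whenever the minimum exists).\<close>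
definition phi_tilde :: "nat \<Rightarrow> (real \<Rightarrow> real) \<Rightarrow> real \<Rightarrow> real" where
  "phi_tilde n \<phi> r = (INF \<delta>\<in>{0<..}. \<delta> + \<phi> (\<delta> ^ (2*n+1) * r) / \<delta> ^ (2*n))"

definition t_sol :: "(real \<Rightarrow> real) \<Rightarrow> real \<Rightarrow> real" where
  "t_sol \<phi> r = (THE t. t \<ge> 0 \<and> t / \<phi> t = r)"

end

theory Submission
  imports Defs
begin

theorem lemma2:
  fixes n :: nat and \<phi> :: "real \<Rightarrow> real"
  assumes n: "n \<ge> 1"
    and diff: "\<forall>x\<ge>0. \<phi> differentiable (at x within {0..})"
    and pos: "\<forall>x\<ge>0. \<phi> x > 0"
    and decr: "\<forall>x y. 0 \<le> x \<longrightarrow> x \<le> y \<longrightarrow> \<phi> y \<le> \<phi> x"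
    and lim: "(\<phi> \<longlongrightarrow> 0) at_top"
  shows "(\<forall>r>0. \<exists>!t. t \<ge> 0 \<and> t / \<phi> t = r)
     \<and> (\<forall>r>0. t_sol \<phi> differentiable (at r))
     \<and> strict_mono_on {0<..} (t_sol \<phi>)
     \<and> filterlim (t_sol \<phi>) at_top at_top
     \<and> (\<forall>r>0. \<phi> (t_sol \<phi> r) powr (1 / real (2*n+1)) \<le> phi_tilde n \<phi> r
              \<and> phi_tilde n \<phi> r \<le> 2 * \<phi> (t_sol \<phi> r) powr (1 / real (2*n+1)))"
proof -
  define g where "g = (\<lambda>t. t / \<phi> t)"
  have gmono: "g a < g b" if "0 \<le> a" "a < b" for a b
  proof -
    have pa: "\<phi> a > 0" "\<phi> b > 0" using pos that by auto
    have "\<phi> b \<le> \<phi> a" using decr that by auto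
    then have "a / \<phi> a \<le> a / \<phi> b" using pa that
      by (simp add: frac_le)
    also have "\<dots> < b / \<phi> b" using pa that by (simp add: divide_strict_right_mono)
    finally show ?thesis unfolding g_def .
  qed
  have gmono': "g a \<le> g b" if "0 \<le> a" "a \<le> b" for a b
    using gmono[of a b] that by (cases "a = b") auto
  have phicont: "continuous_on {0..} \<phi>"
    using diff differentiable_imp_continuous_within continuous_on_eq_continuous_within
    by (metis atLeast_iff)
  have gcont: "continuous_on {0..} g"
    unfolding g_def using phicont pos
    by (intro continuous_on_divide continuous_on_id) auto
  have gge: "g t \<ge> t / \<phi> 0" if "t \<ge> 0" for t
  proof -
    have "\<phi> t \<le> \<phi> 0" "\<phi> t > 0" using decr pos that by auto
    then show ?thesis unfolding g_def using that by (simp add: frac_le)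
  qed
  have ex: "\<exists>t\<ge>0. g t = r" if "r > 0" for r
  proof -
    have p0: "\<phi> 0 > 0" using pos by auto
    have "g 0 \<le> r" using that by (simp add: g_def)
    moreover have "r \<le> g (r * \<phi> 0)" using gge[of "r * \<phi> 0"] p0 that by simp
    moreover have "continuous_on {0 .. r * \<phi> 0} g"
      using gcont by (rule continuous_on_subset) auto
    ultimately show ?thesis using IVT'[of g 0 r "r * \<phi> 0"] p0 that by force
  qed
  have uniq: "t = s" if "t \<ge> 0" "s \<ge> 0" "g t = g s" for t s
    using gmono[of t s] gmono[of s t] that by (cases t s rule: linorder_cases) auto
  have EU: "\<forall>r>0. \<exists>!t. t \<ge> 0 \<and> t / \<phi> t = r"
    using ex uniq unfolding g_def by metis
  have tsol: "t_sol \<phi> r \<ge> 0 \<and> g (t_sol \<phi> r) = r" if "r > 0" for r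
    using theI'[OF EU[rule_format, OF that]] unfolding t_sol_def g_def by simp
  have tpos: "t_sol \<phi> r > 0" if "r > 0" for r
  proof -
    have "t_sol \<phi> r \<noteq> 0" using tsol[OF that] that by (auto simp: g_def)
    then show ?thesis using tsol[OF that] by auto
  qed
  have gpos: "g t > 0" if "t > 0" for t using pos that by (simp add: g_def)
  have tsol_g: "t_sol \<phi> (g t) = t" if "t > 0" for t
    using tsol[OF gpos[OF that]] uniq[of "t_sol \<phi> (g t)" t] that by auto
  have gderiv: "\<exists>E. E \<noteq> 0 \<and> (g has_real_derivative E) (at t)" if "t > 0" for t
  proof -
    have "\<phi> differentiable (at t within {0<..})"
      using diff that differentiable_within_subset[of \<phi> t "{0..}" "{0<..}"] by force
    then have "\<phi> differentiable (at t)"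
      using at_within_open[of t "{0<..}"] that by auto
    then obtain D where D: "(\<phi> has_real_derivative D) (at t)"
      using real_differentiable_def by blast
    have Dle: "D \<le> 0"
    proof (rule ccontr)
      assume "\<not> D \<le> 0"
      then obtain d where "d > 0" "\<forall>h>0. h < d \<longrightarrow> \<phi> t < \<phi> (t + h)"
        using DERIV_pos_inc_right[OF D] by force
      then have "\<phi> t < \<phi> (t + d/2)" by auto
      moreover have "\<phi> (t + d/2) \<le> \<phi> t" using decr that \<open>d > 0\<close> by auto
      ultimately show False by simp
    qed
    have pt: "\<phi> t > 0" using pos that by auto
    have "(g has_real_derivative (1 * \<phi> t - t * D) / (\<phi> t * \<phi> t)) (at t)"
      unfolding g_def using pt by (intro DERIV_divide DERIV_ident D) auto
    moreover have "(1 * \<phi> t - t * D) / (\<phi> t * \<phi> t) \<noteq> 0"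
      using pt Dle that by (smt (verit) divide_eq_0_iff mult_nonneg_nonpos mult_pos_pos)
    ultimately show ?thesis by blast
  qed
  have gisCont: "isCont g t" if "t > 0" for t
    using gderiv[OF that] DERIV_isCont by blast
  have D2: "\<forall>r>0. t_sol \<phi> differentiable (at r)"
  proof (intro allI impI)
    fix r :: real assume r: "r > 0"
    define x where "x = t_sol \<phi> r"
    have x: "x > 0" "g x = r" using tpos[OF r] tsol[OF r] by (auto simp: x_def)
    have "isCont (t_sol \<phi>) (g x)"
    proof (rule isCont_inverse_function[where d = "x/2" and x = x and f = g and g = "t_sol \<phi>"])
      show "0 < x/2" using x by simp
    next
      fix z assume "\<bar>z - x\<bar> \<le> x/2"
      then have "z > 0" using x by linarith
      then show "t_sol \<phi> (g z) = z" using tsol_g by auto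
    next
      fix z assume "\<bar>z - x\<bar> \<le> x/2"
      then have "z > 0" using x by linarith
      then show "isCont g z" using gisCont by auto
    qed
    then have ic: "isCont (t_sol \<phi>) r" using x by simp
    obtain E where E: "E \<noteq> 0" "(g has_real_derivative E) (at (t_sol \<phi> r))"
      using gderiv[OF tpos[OF r]] by blast
    have "(t_sol \<phi> has_real_derivative inverse E) (at r)"
      by (rule DERIV_inverse_function[where f = g and g = "t_sol \<phi>" and x = r and a = 0 and b = "r+1", OF E(2) E(1)])
         (use r tsol ic in auto)
    then show "t_sol \<phi> differentiable (at r)"
      using real_differentiable_def by blast
  qed
  have SM: "strict_mono_on {0<..} (t_sol \<phi>)"
  proof (rule strict_mono_onI)
    fix r s :: real assume "r \<in> {0<..}" "s \<in> {0<..}" "r < s"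
    then have "r > 0" "s > 0" "r < s" by auto
    show "t_sol \<phi> r < t_sol \<phi> s"
    proof (rule ccontr)
      assume "\<not> ?thesis"
      then have "g (t_sol \<phi> s) \<le> g (t_sol \<phi> r)"
        using gmono'[of "t_sol \<phi> s" "t_sol \<phi> r"] tsol[of s] \<open>s > 0\<close> by auto
      then show False using tsol \<open>r > 0\<close> \<open>s > 0\<close> \<open>r < s\<close> by auto
    qed
  qed
  have FL: "filterlim (t_sol \<phi>) at_top at_top"
    unfolding filterlim_at_top
  proof
    fix Z :: real
    define M where "M = max Z 1"
    show "eventually (\<lambda>r. Z \<le> t_sol \<phi> r) at_top"
      unfolding eventually_at_top_linorder
    proof (intro exI allI impI)
      fix r assume r: "r \<ge> g M + 1"
      have "g M > 0" using gpos M_def by auto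
      then have rp: "r > 0" using r by auto
      have "M \<le> t_sol \<phi> r"
      proof (rule ccontr)
        assume "\<not> ?thesis"
        then have "g (t_sol \<phi> r) < g M" using gmono[of "t_sol \<phi> r" M] tsol[OF rp] by auto
        then show False using tsol[OF rp] r by auto
      qed
      then show "Z \<le> t_sol \<phi> r" by (simp add: M_def)
    qed
  qed
  have BND: "\<phi> (t_sol \<phi> r) powr (1 / real (2*n+1)) \<le> phi_tilde n \<phi> r
              \<and> phi_tilde n \<phi> r \<le> 2 * \<phi> (t_sol \<phi> r) powr (1 / real (2*n+1))"
    if r: "r > 0" for r
  proof -
    define T where "T = t_sol \<phi> r"
    define c where "c = \<phi> T powr (1 / real (2*n+1))"
    have T: "T > 0" "T / \<phi> T = r" using tpos[OF r] tsol[OF r] by (auto simp: T_def g_def)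
    have pT: "\<phi> T > 0" using pos T by auto
    have cpos: "c > 0" using pT by (simp add: c_def)
    have cpow: "c ^ (2*n+1) = \<phi> T"
    proof -
      have "c ^ (2*n+1) = c powr real (2*n+1)" using cpos by (simp only: powr_realpow)
      also have "\<dots> = \<phi> T powr (1 / real (2*n+1) * real (2*n+1))"
        unfolding c_def by (simp only: powr_powr)
      also have "\<dots> = \<phi> T" using pT by simp
      finally show ?thesis .
    qed
    have Tr: "T = \<phi> T * r" using T pT by (auto simp: field_simps)
    define F where "F = (\<lambda>\<delta>. \<delta> + \<phi> (\<delta> ^ (2*n+1) * r) / \<delta> ^ (2*n))"
    have Fnn: "F \<delta> \<ge> 0" if "\<delta> > 0" for \<delta>
    proof -
      have "\<delta> ^ (2*n+1) * r \<ge> 0" using that r by simp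
      then have "\<phi> (\<delta> ^ (2*n+1) * r) > 0" using pos by blast
      then show ?thesis unfolding F_def using that by simp
    qed
    have bdd: "bdd_below (F ` {0<..})"
      using Fnn by (intro bdd_belowI[of _ 0]) auto
    have Fc: "F c = 2 * c"
    proof -
      have "c ^ (2*n+1) * r = T" using cpow Tr by simp
      then have "F c = c + c ^ (2*n+1) / c ^ (2*n)" unfolding F_def using cpow by simp
      also have "c ^ (2*n+1) / c ^ (2*n) = c" using cpos by simp
      finally show ?thesis by simp
    qed
    have up: "phi_tilde n \<phi> r \<le> 2 * c"
      unfolding phi_tilde_def F_def[symmetric] using cINF_lower[OF bdd, of c] cpos Fc by auto
    have lowF: "c \<le> F \<delta>" if d: "\<delta> > 0" for \<delta>
    proof (cases "c \<le> \<delta>")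
      case True
      have "\<delta> ^ (2*n+1) * r \<ge> 0" using d r by simp
      then have "\<phi> (\<delta> ^ (2*n+1) * r) > 0" using pos by blast
      then have "\<phi> (\<delta> ^ (2*n+1) * r) / \<delta> ^ (2*n) \<ge> 0" using d by simp
      then show ?thesis using True unfolding F_def by simp
    next
      case False
      then have dc: "\<delta> < c" by simp
      have "\<delta> ^ (2*n+1) \<le> c ^ (2*n+1)" using dc d by (intro power_mono) auto
      then have "\<delta> ^ (2*n+1) * r \<le> T" using Tr cpow r mult_right_mono[of "\<delta> ^ (2*n+1)" "\<phi> T" r] by simp
      then have "\<phi> T \<le> \<phi> (\<delta> ^ (2*n+1) * r)" using decr d r by auto
      then have "c ^ (2*n+1) / \<delta> ^ (2*n) \<le> \<phi> (\<delta> ^ (2*n+1) * r) / \<delta> ^ (2*n)"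
        using cpow d by (simp add: divide_right_mono)
      moreover have "c \<le> c ^ (2*n+1) / \<delta> ^ (2*n)"
      proof -
        have "\<delta> ^ (2*n) \<le> c ^ (2*n)" using dc d by (intro power_mono) auto
        then have "c * \<delta> ^ (2*n) \<le> c * c ^ (2*n)"
          using cpos by (simp add: mult_left_mono)
        then show ?thesis using d by (simp add: field_simps)
      qed
      ultimately show ?thesis unfolding F_def using d by linarith
    qed
    have lo: "c \<le> phi_tilde n \<phi> r"
      unfolding phi_tilde_def F_def[symmetric]
      by (rule cINF_greatest) (use lowF in auto)
    show ?thesis using up lo by (simp add: c_def T_def)
  qed
  show ?thesis using EU D2 SM FL BND by blast
qed

end
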